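(* Let $G=(V,E,\ell)$ be a finite node-labeled directed graph, let $\mathcal{L}:V\times V\to[0,1]$ satisfy $\mathcal{L}(u,v)=1$ if and only if $\ell(u)=\ell(v)$, and let $0<w^+<1$ (with $w^-=0$). Define $F^0=\mathcal{L}$ and, for $k\ge1$, $$F^k(u,v)=w^+A^k(N^+_G(u),N^+_G(v))+(1-w^+)\mathcal{L}(u,v),$$ where for $S_1,S_2\subseteq V$: $A^k(S_1,S_2)=1$ if $S_1=S_2=\emptyset$, and otherwise $$A^k(S_1,S_2)=\frac{1}{|S_1|+|S_2|}\Big(\sum_{x\in S_1}\max_{y\in S_2}F^{k-1}(x,y)+\sum_{y\in S_2}\max_{x\in S_1}F^{k-1}(x,y)\Big),$$ with the convention that a maximum over the empty set is $0$. Then for every integer $k\ge0$ and all $u,v\in V$: $u$ and $v$ are $k$-bisimilar if and only if $F^k(u,v)=1$.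
   Context: $N^+_G(u)=\{u':(u,u')\in E\}$ is the out-neighbor set of $u$. $k$-bisimilarity is defined recursively: $u$ and $v$ are $0$-bisimilar iff $\ell(u)=\ell(v)$; for $k>0$, $u$ and $v$ are $k$-bisimilar iff (1) $\ell(u)=\ell(v)$, (2) for every $u'\in N^+_G(u)$ there is $v'\in N^+_G(v)$ such that $u'$ and $v'$ are $(k-1)$-bisimilar, and (3) for every $v'\in N^+_G(v)$ there is $u'\in N^+_G(u)$ such that $u'$ and $v'$ are $(k-1)$-bisimilar. The iteration $F^k$ is the $k$-th iterate of the paper's fractional bisimulation score $\mathrm{FSim}_b$ with $w^-=0$ on a single graph. *)

theory Defs
  imports Complex_Main
begin

definition out_nbrs :: "('v \<times> 'v) set \<Rightarrow> 'v \<Rightarrow> 'v set" where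
  "out_nbrs E u = {u'. (u, u') \<in> E}"

fun k_bisim :: "('v \<times> 'v) set \<Rightarrow> ('v \<Rightarrow> 'l) \<Rightarrow> nat \<Rightarrow> 'v \<Rightarrow> 'v \<Rightarrow> bool" where
  "k_bisim E lab 0 u v = (lab u = lab v)"
| "k_bisim E lab (Suc k) u v =
     (lab u = lab v
      \<and> (\<forall>u'\<in>out_nbrs E u. \<exists>v'\<in>out_nbrs E v. k_bisim E lab k u' v')
      \<and> (\<forall>v'\<in>out_nbrs E v. \<exists>u'\<in>out_nbrs E u. k_bisim E lab k u' v'))"

definition max0 :: "'a set \<Rightarrow> ('a \<Rightarrow> real) \<Rightarrow> real" where
  "max0 S f = (if S = {} then 0 else Max (f ` S))"

definition agg :: "('v \<Rightarrow> 'v \<Rightarrow> real) \<Rightarrow> 'v set \<Rightarrow> 'v set \<Rightarrow> real" where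
  "agg F S1 S2 =
     (if S1 = {} \<and> S2 = {} then 1
      else (1 / real (card S1 + card S2)) *
           ((\<Sum>x\<in>S1. max0 S2 (\<lambda>y. F x y)) + (\<Sum>y\<in>S2. max0 S1 (\<lambda>x. F x y))))"

fun FSim_iter :: "('v \<times> 'v) set \<Rightarrow> ('v \<Rightarrow> 'v \<Rightarrow> real) \<Rightarrow> real \<Rightarrow> nat \<Rightarrow> 'v \<Rightarrow> 'v \<Rightarrow> real" where
  "FSim_iter E L wp 0 u v = L u v"
| "FSim_iter E L wp (Suc k) u v =
     wp * agg (FSim_iter E L wp k) (out_nbrs E u) (out_nbrs E v) + (1 - wp) * L u v"

end

theory Submission
  imports Defs
begin

lemma max0_props:
  assumes "finite S" "\<forall>y\<in>S. 0 \<le> f y \<and> f y \<le> 1"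
  shows "0 \<le> max0 S f \<and> max0 S f \<le> 1 \<and> (max0 S f = 1 \<longleftrightarrow> (\<exists>y\<in>S. f y = 1))"
proof (cases "S = {}")
  case True then show ?thesis by (simp add: max0_def)
next
  case False
  have fin: "finite (f ` S)" and ne: "f ` S \<noteq> {}" using assms False by auto
  have mem: "Max (f ` S) \<in> f ` S" using Max_in[OF fin ne] .
  have le: "Max (f ` S) \<le> 1" using Max_le_iff[OF fin ne] assms by auto
  have ge: "0 \<le> Max (f ` S)" using mem assms by auto
  have "Max (f ` S) = 1 \<longleftrightarrow> (\<exists>y\<in>S. f y = 1)"
  proof
    assume "Max (f ` S) = 1" then show "\<exists>y\<in>S. f y = 1" using mem by auto
  next
    assume "\<exists>y\<in>S. f y = 1"
    then obtain y where "y \<in> S" "f y = 1" by auto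
    then have "1 \<le> Max (f ` S)" using Max_ge[OF fin] by force
    then show "Max (f ` S) = 1" using le by auto
  qed
  then show ?thesis using False le ge by (simp add: max0_def)
qed

lemma sum_le_card_iff:
  fixes g :: "'a \<Rightarrow> real"
  assumes "finite S" "\<forall>x\<in>S. 0 \<le> g x \<and> g x \<le> 1"
  shows "0 \<le> sum g S \<and> sum g S \<le> card S \<and> (sum g S = card S \<longleftrightarrow> (\<forall>x\<in>S. g x = 1))"
proof -
  have d: "sum (\<lambda>x. 1 - g x) S = card S - sum g S"
    by (simp add: sum_subtractf)
  have nn: "\<And>x. x \<in> S \<Longrightarrow> 0 \<le> 1 - g x" using assms(2) by simp
  have z: "sum (\<lambda>x. 1 - g x) S = 0 \<longleftrightarrow> (\<forall>x\<in>S. 1 - g x = 0)"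
    by (rule sum_nonneg_eq_0_iff[OF assms(1)]) (rule nn)
  have z2: "(\<forall>x\<in>S. 1 - g x = 0) \<longleftrightarrow> (\<forall>x\<in>S. g x = 1)" by simp
  have p1: "0 \<le> sum (\<lambda>x. 1 - g x) S" using nn by (rule sum_nonneg)
  have p2: "0 \<le> sum g S" using assms(2) by (simp add: sum_nonneg)
  have "sum g S = card S \<longleftrightarrow> (\<forall>x\<in>S. g x = 1)" using d z z2 by linarith
  then show ?thesis using d p1 p2 by linarith
qed

lemma agg_props:
  assumes "finite S1" "finite S2" "\<forall>x\<in>S1. \<forall>y\<in>S2. 0 \<le> F x y \<and> F x y \<le> 1"
  shows "0 \<le> agg F S1 S2 \<and> agg F S1 S2 \<le> 1 \<and>
    (agg F S1 S2 = 1 \<longleftrightarrow> (\<forall>x\<in>S1. \<exists>y\<in>S2. F x y = 1) \<and> (\<forall>y\<in>S2. \<exists>x\<in>S1. F x y = 1))"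
proof (cases "S1 = {} \<and> S2 = {}")
  case True then show ?thesis by (simp add: agg_def)
next
  case False
  define a where "a = (\<Sum>x\<in>S1. max0 S2 (\<lambda>y. F x y))"
  define b where "b = (\<Sum>y\<in>S2. max0 S1 (\<lambda>x. F x y))"
  have m1: "\<forall>x\<in>S1. 0 \<le> max0 S2 (\<lambda>y. F x y) \<and> max0 S2 (\<lambda>y. F x y) \<le> 1 \<and>
     (max0 S2 (\<lambda>y. F x y) = 1 \<longleftrightarrow> (\<exists>y\<in>S2. F x y = 1))"
  proof
    fix x assume "x \<in> S1"
    then have "\<forall>y\<in>S2. 0 \<le> F x y \<and> F x y \<le> 1" using assms(3) by blast
    then show "0 \<le> max0 S2 (\<lambda>y. F x y) \<and> max0 S2 (\<lambda>y. F x y) \<le> 1 \<and>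
     (max0 S2 (\<lambda>y. F x y) = 1 \<longleftrightarrow> (\<exists>y\<in>S2. F x y = 1))" by (rule max0_props[OF assms(2)])
  qed
  have m2: "\<forall>y\<in>S2. 0 \<le> max0 S1 (\<lambda>x. F x y) \<and> max0 S1 (\<lambda>x. F x y) \<le> 1 \<and>
     (max0 S1 (\<lambda>x. F x y) = 1 \<longleftrightarrow> (\<exists>x\<in>S1. F x y = 1))"
  proof
    fix y assume "y \<in> S2"
    then have "\<forall>x\<in>S1. 0 \<le> F x y \<and> F x y \<le> 1" using assms(3) by blast
    then show "0 \<le> max0 S1 (\<lambda>x. F x y) \<and> max0 S1 (\<lambda>x. F x y) \<le> 1 \<and>
     (max0 S1 (\<lambda>x. F x y) = 1 \<longleftrightarrow> (\<exists>x\<in>S1. F x y = 1))" by (rule max0_props[OF assms(1)])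
  qed
  have A: "0 \<le> a \<and> a \<le> card S1 \<and> (a = card S1 \<longleftrightarrow> (\<forall>x\<in>S1. \<exists>y\<in>S2. F x y = 1))"
    using sum_le_card_iff[OF assms(1), of "\<lambda>x. max0 S2 (\<lambda>y. F x y)"] m1 unfolding a_def by auto
  have B: "0 \<le> b \<and> b \<le> card S2 \<and> (b = card S2 \<longleftrightarrow> (\<forall>y\<in>S2. \<exists>x\<in>S1. F x y = 1))"
    using sum_le_card_iff[OF assms(2), of "\<lambda>y. max0 S1 (\<lambda>x. F x y)"] m2 unfolding b_def by auto
  have cpos: "0 < real (card S1 + card S2)" using False assms card_0_eq by fastforce
  have ag: "agg F S1 S2 = (a + b) / real (card S1 + card S2)"
    using False by (simp add: agg_def a_def b_def)
  have "0 \<le> (a + b) / real (card S1 + card S2)" using A B cpos by simp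
  moreover have "(a + b) / real (card S1 + card S2) \<le> 1" using A B cpos by simp
  moreover have "(a + b) / real (card S1 + card S2) = 1 \<longleftrightarrow> a + b = real (card S1 + card S2)"
    using cpos by (auto simp add: divide_eq_1_iff)
  moreover have "a + b = real (card S1 + card S2) \<longleftrightarrow> a = card S1 \<and> b = card S2"
    using A B by auto
  ultimately show ?thesis using ag A B by simp
qed

theorem theorem4:
  fixes V :: "'v set" and E :: "('v \<times> 'v) set" and lab :: "'v \<Rightarrow> 'l"
    and L :: "'v \<Rightarrow> 'v \<Rightarrow> real" and wp :: real
  assumes "finite V"
    and "E \<subseteq> V \<times> V"
    and "\<forall>u\<in>V. \<forall>v\<in>V. 0 \<le> L u v \<and> L u v \<le> 1"
    and "\<forall>u\<in>V. \<forall>v\<in>V. L u v = 1 \<longleftrightarrow> lab u = lab v"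
    and "0 < wp" and "wp < 1"
  shows "\<forall>k::nat. \<forall>u\<in>V. \<forall>v\<in>V. k_bisim E lab k u v \<longleftrightarrow> FSim_iter E L wp k u v = 1"
proof -
  have nb: "out_nbrs E u \<subseteq> V" for u using assms(2) by (auto simp: out_nbrs_def)
  have fn: "finite (out_nbrs E u)" for u using nb assms(1) finite_subset by blast
  have "\<forall>u\<in>V. \<forall>v\<in>V. 0 \<le> FSim_iter E L wp k u v \<and> FSim_iter E L wp k u v \<le> 1 \<and>
      (k_bisim E lab k u v \<longleftrightarrow> FSim_iter E L wp k u v = 1)" for k
  proof (induction k)
    case 0 then show ?case using assms(3,4) by simp
  next
    case (Suc k)
    show ?case
    proof (intro ballI)
      fix u v assume u: "u \<in> V" and v: "v \<in> V"
      let ?F = "FSim_iter E L wp k"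
      have IH: "\<And>x y. x \<in> out_nbrs E u \<Longrightarrow> y \<in> out_nbrs E v \<Longrightarrow>
          0 \<le> ?F x y \<and> ?F x y \<le> 1 \<and> (k_bisim E lab k x y \<longleftrightarrow> ?F x y = 1)"
      proof -
        fix x y assume "x \<in> out_nbrs E u" "y \<in> out_nbrs E v"
        then have "x \<in> V" "y \<in> V" using nb by (auto simp del: out_nbrs_def)
        then show "0 \<le> ?F x y \<and> ?F x y \<le> 1 \<and> (k_bisim E lab k x y \<longleftrightarrow> ?F x y = 1)"
          using Suc.IH by (simp only: Ball_def)
      qed
      have bnd: "\<forall>x\<in>out_nbrs E u. \<forall>y\<in>out_nbrs E v. 0 \<le> ?F x y \<and> ?F x y \<le> 1"
        using IH by simp
      note AG = agg_props[OF fn fn bnd]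
      define a where "a = agg ?F (out_nbrs E u) (out_nbrs E v)"
      have L: "0 \<le> L u v \<and> L u v \<le> 1" "L u v = 1 \<longleftrightarrow> lab u = lab v" using assms(3,4) u v by auto
      have a: "0 \<le> a" "a \<le> 1" using AG a_def by auto
      have eq: "FSim_iter E L wp (Suc k) u v = wp * a + (1 - wp) * L u v" by (simp add: a_def)
      have lo: "0 \<le> wp * a + (1 - wp) * L u v" using a L assms(5,6) by simp
      have hi1: "wp * a \<le> wp" using a assms(5) by (simp add: mult_left_le)
      have hi2: "(1 - wp) * L u v \<le> 1 - wp" using L assms(6) by (simp add: mult_left_le)
      have iff: "wp * a + (1 - wp) * L u v = 1 \<longleftrightarrow> a = 1 \<and> L u v = 1"
      proof
        assume h: "wp * a + (1 - wp) * L u v = 1"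
        then have "wp * a = wp" "(1 - wp) * L u v = 1 - wp" using hi1 hi2 by linarith+
        then show "a = 1 \<and> L u v = 1" using assms(5,6) by auto
      qed simp
      have kb: "\<And>x y. x \<in> out_nbrs E u \<Longrightarrow> y \<in> out_nbrs E v \<Longrightarrow> k_bisim E lab k x y = (?F x y = 1)"
        using IH by simp
      have e1: "(\<forall>x\<in>out_nbrs E u. \<exists>y\<in>out_nbrs E v. k_bisim E lab k x y) \<longleftrightarrow>
              (\<forall>x\<in>out_nbrs E u. \<exists>y\<in>out_nbrs E v. ?F x y = 1)"
        using kb by (intro ball_cong bex_cong) auto
      have e2: "(\<forall>y\<in>out_nbrs E v. \<exists>x\<in>out_nbrs E u. k_bisim E lab k x y) \<longleftrightarrow>
              (\<forall>y\<in>out_nbrs E v. \<exists>x\<in>out_nbrs E u. ?F x y = 1)"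
        using kb by (intro ball_cong bex_cong) auto
      have a1: "a = 1 \<longleftrightarrow> (\<forall>x\<in>out_nbrs E u. \<exists>y\<in>out_nbrs E v. ?F x y = 1) \<and>
          (\<forall>y\<in>out_nbrs E v. \<exists>x\<in>out_nbrs E u. ?F x y = 1)"
        using AG unfolding a_def by (simp only:)
      have ks: "k_bisim E lab (Suc k) u v \<longleftrightarrow> lab u = lab v \<and>
          (\<forall>x\<in>out_nbrs E u. \<exists>y\<in>out_nbrs E v. k_bisim E lab k x y) \<and>
          (\<forall>y\<in>out_nbrs E v. \<exists>x\<in>out_nbrs E u. k_bisim E lab k x y)"
        by (simp only: k_bisim.simps)
      have "k_bisim E lab (Suc k) u v \<longleftrightarrow> a = 1 \<and> L u v = 1"
        unfolding ks e1 e2 a1 L(2) by (rule iffI; elim conjE; intro conjI)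
      then show "0 \<le> FSim_iter E L wp (Suc k) u v \<and> FSim_iter E L wp (Suc k) u v \<le> 1 \<and>
        (k_bisim E lab (Suc k) u v \<longleftrightarrow> FSim_iter E L wp (Suc k) u v = 1)"
        using eq lo hi1 hi2 iff by linarith
    qed
  qed
  then show ?thesis by blast
qed

end
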